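(* Let $\Sigma$ be a finite group, let $f\colon A\to B$ be a difference homomorphism of difference rings, $X=\operatorname{PSpec}A$, $Y=\operatorname{PSpec}B$, and $f^*_\Sigma\colon Y\to X$, $\mathfrak q\mapsto f^{-1}(\mathfrak q)$. Then: (1) if for some $s\in A$ and $u\in B$ the map $\operatorname{Spec}B_{f(s)u}\to\operatorname{Spec}A_s$ induced by $f$ is surjective, then $f^*_\Sigma$ maps $Y_{f(s)u}$ onto $X_s$; (2) if for some $s\in A$ the map $\operatorname{Spec}B_{f(s)}\to\operatorname{Spec}A_s$ induced by $f$ has the going-up property, then $f^*_\Sigma\colon Y_{f(s)}\to X_s$ has the going-up property; (3) if for some $s\in A$ and $u\in B$ the map $\operatorname{Spec}B_{f(s)u}\to\operatorname{Spec}A_s$ induced by $f$ has the going-down property, then $f^*_\Sigma\colon Y_{f(s)u}\to X_s$ has the going-down property.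
   Context: A difference ring is a commutative ring with identity with an action of the group $\Sigma$ by ring automorphisms; a difference homomorphism is a unital ring homomorphism commuting with the actions; a difference ideal is a $\Sigma$-stable ideal. A difference ideal $\mathfrak q$ is pseudoprime if there is a multiplicatively closed $S\ni1$ such that $\mathfrak q$ is maximal among difference ideals not meeting $S$; $\operatorname{PSpec}A$ is the set of pseudoprime ideals, and for $s\in A$, $X_s$ denotes the set of pseudoprime ideals of $A$ not containing $s$ (similarly $Y_t$ for $t\in B$). Contractions of pseudoprime ideals under difference homomorphisms are pseudoprime. A map $g\colon\operatorname{Spec}B'\to\operatorname{Spec}A'$ (contraction along $A'\to B'$) has the going-up property if for every chain of primes $\mathfrak p_1\subseteq\dots\subseteq\mathfrak p_n$ of $A'$ and every chain $\mathfrak q_1\subseteq\dots\subseteq\mathfrak q_m$ ($0<m<n$) of primes of $B'$ with $\mathfrak q_i^c=\mathfrak p_i$, the latter chain extends to $\mathfrak q_1\subseteq\dots\subseteq\mathfrak q_n$ with $\mathfrak q_i^c=\mathfrak p_i$ for all $i$; going-down is defined in the same way with all inclusions reversed. For subsets $Y'\subseteq Y$, $X'\subseteq X$ with $f^*_\Sigma(Y')\subseteq X'$, the map $f^*_\Sigma\colon Y'\to X'$ has the going-up (resp. going-down) property if the same condition holds with all chains consisting of pseudoprime ideals, the chains of $A$ lying in $X'$ and the chains of $B$ (including the extended ones) lying in $Y'$. *)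

theory Defs
  imports "HOL-Algebra.Algebra"
begin

definition diff_ring :: "('g,'c) monoid_scheme \<Rightarrow> ('a,'m) ring_scheme \<Rightarrow> ('g \<Rightarrow> 'a \<Rightarrow> 'a) \<Rightarrow> bool" where
  "diff_ring G A act \<longleftrightarrow> group G \<and> cring A \<and>
     (\<forall>g\<in>carrier G. act g \<in> ring_iso A A) \<and>
     (\<forall>x\<in>carrier A. act \<one>\<^bsub>G\<^esub> x = x) \<and>
     (\<forall>g\<in>carrier G. \<forall>h\<in>carrier G. \<forall>x\<in>carrier A.
        act (g \<otimes>\<^bsub>G\<^esub> h) x = act g (act h x))"

definition diff_hom :: "('g,'c) monoid_scheme \<Rightarrow> ('a,'m) ring_scheme \<Rightarrow> ('g \<Rightarrow> 'a \<Rightarrow> 'a)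
    \<Rightarrow> ('b,'n) ring_scheme \<Rightarrow> ('g \<Rightarrow> 'b \<Rightarrow> 'b) \<Rightarrow> ('a \<Rightarrow> 'b) \<Rightarrow> bool" where
  "diff_hom G A actA B actB f \<longleftrightarrow> f \<in> ring_hom A B \<and>
     (\<forall>g\<in>carrier G. \<forall>x\<in>carrier A. f (actA g x) = actB g (f x))"

definition diff_ideal :: "('g,'c) monoid_scheme \<Rightarrow> ('a,'m) ring_scheme \<Rightarrow> ('g \<Rightarrow> 'a \<Rightarrow> 'a) \<Rightarrow> 'a set \<Rightarrow> bool" where
  "diff_ideal G A act I \<longleftrightarrow> ideal I A \<and> (\<forall>g\<in>carrier G. act g ` I \<subseteq> I)"

definition mult_closed :: "('a,'m) ring_scheme \<Rightarrow> 'a set \<Rightarrow> bool" where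
  "mult_closed A S \<longleftrightarrow> S \<subseteq> carrier A \<and> \<one>\<^bsub>A\<^esub> \<in> S \<and>
     (\<forall>x\<in>S. \<forall>y\<in>S. x \<otimes>\<^bsub>A\<^esub> y \<in> S)"

definition pseudoprime :: "('g,'c) monoid_scheme \<Rightarrow> ('a,'m) ring_scheme \<Rightarrow> ('g \<Rightarrow> 'a \<Rightarrow> 'a) \<Rightarrow> 'a set \<Rightarrow> bool" where
  "pseudoprime G A act q \<longleftrightarrow>
     (\<exists>S. mult_closed A S \<and> diff_ideal G A act q \<and> q \<inter> S = {} \<and>
        (\<forall>J. diff_ideal G A act J \<and> J \<inter> S = {} \<and> q \<subseteq> J \<longrightarrow> J = q))"

definition PSpec :: "('g,'c) monoid_scheme \<Rightarrow> ('a,'m) ring_scheme \<Rightarrow> ('g \<Rightarrow> 'a \<Rightarrow> 'a) \<Rightarrow> 'a set set" where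
  "PSpec G A act = {q. pseudoprime G A act q}"

definition PSpec_basic :: "('g,'c) monoid_scheme \<Rightarrow> ('a,'m) ring_scheme \<Rightarrow> ('g \<Rightarrow> 'a \<Rightarrow> 'a) \<Rightarrow> 'a \<Rightarrow> 'a set set" where
  "PSpec_basic G A act s = {q \<in> PSpec G A act. s \<notin> q}"

text \<open>Spec of the localization A_s, identified (via contraction) with the primes of A
  not containing s; under this identification the map Spec B_{f(s)u} -> Spec A_s
  induced by f is contraction along f.\<close>
definition Spec_loc :: "('a,'m) ring_scheme \<Rightarrow> 'a \<Rightarrow> 'a set set" where
  "Spec_loc A s = {p. primeideal p A \<and> s \<notin> p}"

definition contr :: "('a,'m) ring_scheme \<Rightarrow> ('a \<Rightarrow> 'b) \<Rightarrow> 'b set \<Rightarrow> 'a set" where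
  "contr A f Q = f -` Q \<inter> carrier A"

text \<open>Going-up (R = (\<subseteq>)) / going-down (R = (\<supseteq>)) property of a map g from Y' to X'.
  Chains are indexed 0..<n (instead of 1..n).\<close>
definition going_prop :: "('x \<Rightarrow> 'x \<Rightarrow> bool) \<Rightarrow> ('y \<Rightarrow> 'y \<Rightarrow> bool) \<Rightarrow> ('y \<Rightarrow> 'x) \<Rightarrow> 'y set \<Rightarrow> 'x set \<Rightarrow> bool" where
  "going_prop RX RY g Y' X' \<longleftrightarrow>
     (\<forall>n m P Q. 0 < m \<and> m < n \<and>
        (\<forall>i<n. P i \<in> X') \<and> (\<forall>i. Suc i < n \<longrightarrow> RX (P i) (P (Suc i))) \<and>
        (\<forall>i<m. Q i \<in> Y') \<and> (\<forall>i. Suc i < m \<longrightarrow> RY (Q i) (Q (Suc i))) \<and>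
        (\<forall>i<m. g (Q i) = P i)
      \<longrightarrow> (\<exists>Q'. (\<forall>i<m. Q' i = Q i) \<and> (\<forall>i<n. Q' i \<in> Y') \<and>
              (\<forall>i. Suc i < n \<longrightarrow> RY (Q' i) (Q' (Suc i))) \<and>
              (\<forall>i<n. g (Q' i) = P i)))"

definition going_up :: "('y set \<Rightarrow> 'x set) \<Rightarrow> 'y set set \<Rightarrow> 'x set set \<Rightarrow> bool" where
  "going_up g Y' X' = going_prop (\<subseteq>) (\<subseteq>) g Y' X'"

definition going_down :: "('y set \<Rightarrow> 'x set) \<Rightarrow> 'y set set \<Rightarrow> 'x set set \<Rightarrow> bool" where
  "going_down g Y' X' = going_prop (\<supseteq>) (\<supseteq>) g Y' X'"

end

theory Submission
  imports Defs
begin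


definition core :: "('g,'c) monoid_scheme \<Rightarrow> ('a,'m) ring_scheme \<Rightarrow> ('g \<Rightarrow> 'a \<Rightarrow> 'a) \<Rightarrow> 'a set \<Rightarrow> 'a set" where
  "core G A act p = {a \<in> carrier A. \<forall>g\<in>carrier G. act g a \<in> p}"

definition conjp :: "('a,'m) ring_scheme \<Rightarrow> ('g \<Rightarrow> 'a \<Rightarrow> 'a) \<Rightarrow> 'g \<Rightarrow> 'a set \<Rightarrow> 'a set" where
  "conjp A act t p = {a \<in> carrier A. act t a \<in> p}"

lemma vimage_ideal:
  assumes "ring A" "ring B" "h \<in> ring_hom A B" "ideal P B"
  shows "ideal {a \<in> carrier A. h a \<in> P} A"
proof -
  interpret ring_hom_ring A B h
    using assms by (intro ring_hom_ring.intro ring_hom_ring_axioms.intro) auto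
  show ?thesis using ideal_vimage[OF assms(4)] .
qed

lemma vimage_prime:
  assumes "cring A" "cring B" "h \<in> ring_hom A B" "primeideal P B"
  shows "primeideal {a \<in> carrier A. h a \<in> P} A"
proof (rule primeidealI)
  interpret A: cring A by fact
  interpret B: cring B by fact
  interpret P: primeideal P B by fact
  show "ideal {a \<in> carrier A. h a \<in> P} A"
    using vimage_ideal[OF A.ring_axioms B.ring_axioms assms(3) P.is_ideal] .
  show "cring A" by fact
  have "h \<one>\<^bsub>A\<^esub> = \<one>\<^bsub>B\<^esub>" using ring_hom_one[OF assms(3)] .
  moreover have "\<one>\<^bsub>B\<^esub> \<notin> P" using P.one_imp_carrier P.I_notcarr by auto
  ultimately show "carrier A \<noteq> {a \<in> carrier A. h a \<in> P}" using A.one_closed by force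
  fix a b assume "a \<in> carrier A" "b \<in> carrier A" "a \<otimes>\<^bsub>A\<^esub> b \<in> {a \<in> carrier A. h a \<in> P}"
  then show "a \<in> {a \<in> carrier A. h a \<in> P} \<or> b \<in> {a \<in> carrier A. h a \<in> P}"
    using P.I_prime ring_hom_mult[OF assms(3)] ring_hom_closed[OF assms(3)] by auto
qed

lemma dr_group: "diff_ring G A act \<Longrightarrow> group G" by (simp add: diff_ring_def)
lemma dr_cring: "diff_ring G A act \<Longrightarrow> cring A" by (simp add: diff_ring_def)
lemma dr_hom: "diff_ring G A act \<Longrightarrow> g \<in> carrier G \<Longrightarrow> act g \<in> ring_hom A A"
  by (simp add: diff_ring_def ring_iso_def)
lemma dr_closed: "diff_ring G A act \<Longrightarrow> g \<in> carrier G \<Longrightarrow> x \<in> carrier A \<Longrightarrow> act g x \<in> carrier A"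
  using dr_hom ring_hom_closed by metis
lemma dr_comp: "diff_ring G A act \<Longrightarrow> g \<in> carrier G \<Longrightarrow> h \<in> carrier G \<Longrightarrow> x \<in> carrier A \<Longrightarrow>
   act (g \<otimes>\<^bsub>G\<^esub> h) x = act g (act h x)"
  by (simp add: diff_ring_def)
lemma dr_one: "diff_ring G A act \<Longrightarrow> x \<in> carrier A \<Longrightarrow> act \<one>\<^bsub>G\<^esub> x = x"
  by (simp add: diff_ring_def)
lemma dr_mult: "diff_ring G A act \<Longrightarrow> g \<in> carrier G \<Longrightarrow> x \<in> carrier A \<Longrightarrow> y \<in> carrier A \<Longrightarrow>
   act g (x \<otimes>\<^bsub>A\<^esub> y) = act g x \<otimes>\<^bsub>A\<^esub> act g y"
  using dr_hom ring_hom_mult by metis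

lemma conjp_prime:
  assumes "diff_ring G A act" "t \<in> carrier G" "primeideal p A"
  shows "primeideal (conjp A act t p) A"
  unfolding conjp_def using vimage_prime[OF dr_cring[OF assms(1)] dr_cring[OF assms(1)] dr_hom[OF assms(1,2)] assms(3)] .

lemma core_sub: "diff_ring G A act \<Longrightarrow> core G A act p \<subseteq> p"
  unfolding core_def using dr_one[of G A act] monoid.one_closed[OF group.is_monoid[OF dr_group]] by fastforce

lemma core_conjp:
  assumes "diff_ring G A act" "t \<in> carrier G"
  shows "core G A act (conjp A act t p) = core G A act p"
proof -
  interpret G: group G using dr_group[OF assms(1)] .
  show ?thesis
  proof (intro equalityI subsetI)
    fix a assume a: "a \<in> core G A act (conjp A act t p)"
    then have ac: "a \<in> carrier A" by (simp add: core_def)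
    show "a \<in> core G A act p" unfolding core_def
    proof (intro CollectI conjI ballI ac)
      fix g assume g: "g \<in> carrier G"
      have "inv\<^bsub>G\<^esub> t \<otimes>\<^bsub>G\<^esub> g \<in> carrier G" using g assms(2) by simp
      then have "act t (act (inv\<^bsub>G\<^esub> t \<otimes>\<^bsub>G\<^esub> g) a) \<in> p" using a by (simp add: core_def conjp_def)
      also have "act t (act (inv\<^bsub>G\<^esub> t \<otimes>\<^bsub>G\<^esub> g) a) = act (t \<otimes>\<^bsub>G\<^esub> (inv\<^bsub>G\<^esub> t \<otimes>\<^bsub>G\<^esub> g)) a"
        using dr_comp[OF assms(1) assms(2) \<open>inv\<^bsub>G\<^esub> t \<otimes>\<^bsub>G\<^esub> g \<in> carrier G\<close> ac] by simp
      also have "t \<otimes>\<^bsub>G\<^esub> (inv\<^bsub>G\<^esub> t \<otimes>\<^bsub>G\<^esub> g) = g"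
        using g assms(2) by (simp add: G.m_assoc[symmetric])
      finally show "act g a \<in> p" .
    qed
  next
    fix a assume a: "a \<in> core G A act p"
    then have ac: "a \<in> carrier A" by (simp add: core_def)
    show "a \<in> core G A act (conjp A act t p)" unfolding core_def conjp_def
    proof (intro CollectI conjI ballI ac)
      fix g assume g: "g \<in> carrier G"
      show "act g a \<in> carrier A" using dr_closed[OF assms(1) g ac] .
      have "act (t \<otimes>\<^bsub>G\<^esub> g) a \<in> p" using a g assms(2) by (simp add: core_def)
      then show "act t (act g a) \<in> p" using dr_comp[OF assms(1) assms(2) g ac] by simp
    qed
  qed
qed

lemma core_diff_ideal:
  assumes "diff_ring G A act" "primeideal p A"
  shows "diff_ideal G A act (core G A act p)"
proof -
  interpret G: group G using dr_group[OF assms(1)] .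
  interpret A: cring A using dr_cring[OF assms(1)] .
  have eq: "core G A act p = \<Inter>((\<lambda>t. conjp A act t p) ` carrier G)"
    unfolding core_def conjp_def by auto
  have "ideal (core G A act p) A" unfolding eq
    apply (rule A.i_Intersect)
    using conjp_prime[OF assms(1) _ assms(2)] primeideal.axioms(1) apply blast
    by blast
  moreover have "\<forall>g\<in>carrier G. act g ` core G A act p \<subseteq> core G A act p"
  proof (intro ballI subsetI)
    fix g x assume g: "g \<in> carrier G" and "x \<in> act g ` core G A act p"
    then obtain a where a: "a \<in> core G A act p" and x: "x = act g a" by auto
    have ac: "a \<in> carrier A" using a by (simp add: core_def)
    show "x \<in> core G A act p" unfolding core_def x
    proof (intro CollectI conjI ballI)
      show "act g a \<in> carrier A" using dr_closed[OF assms(1) g ac] .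
      fix h assume h: "h \<in> carrier G"
      have "act (h \<otimes>\<^bsub>G\<^esub> g) a \<in> p" using a g h by (simp add: core_def)
      then show "act h (act g a) \<in> p" using dr_comp[OF assms(1) h g ac] by simp
    qed
  qed
  ultimately show ?thesis by (simp add: diff_ideal_def)
qed

lemma core_pseudoprime:
  assumes "diff_ring G A act" "primeideal p A"
  shows "pseudoprime G A act (core G A act p)"
  unfolding pseudoprime_def
proof (intro exI[of _ "carrier A - p"] conjI allI impI)
  interpret A: cring A using dr_cring[OF assms(1)] .
  interpret P: primeideal p A by fact
  show "mult_closed A (carrier A - p)" unfolding mult_closed_def
    using P.one_imp_carrier P.I_notcarr P.I_prime by auto
  show "diff_ideal G A act (core G A act p)" using core_diff_ideal[OF assms] .
  show "core G A act p \<inter> (carrier A - p) = {}" using core_sub[OF assms(1)] by auto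
  fix J assume J: "diff_ideal G A act J \<and> J \<inter> (carrier A - p) = {} \<and> core G A act p \<subseteq> J"
  then have Jc: "J \<subseteq> carrier A" using ideal.Icarr by (fastforce simp: diff_ideal_def)
  then have "J \<subseteq> p" using J by auto
  moreover have "J \<subseteq> core G A act p" unfolding core_def
  proof (intro subsetI CollectI conjI)
    fix x assume x: "x \<in> J"
    show "x \<in> carrier A" using x Jc by auto
    show "\<forall>g\<in>carrier G. act g x \<in> p"
    proof
      fix g assume g: "g \<in> carrier G"
      have "act g x \<in> J" using J x g by (auto simp: diff_ideal_def)
      then show "act g x \<in> p" using \<open>J \<subseteq> p\<close> by auto
    qed
  qed
  ultimately show "J = core G A act p" using J by auto
qed



lemma sum_with_elem:
  assumes "cring A" "ideal M A" "x \<in> carrier A"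
  shows "ideal (M <+>\<^bsub>A\<^esub> PIdl\<^bsub>A\<^esub> x) A" "M \<subseteq> M <+>\<^bsub>A\<^esub> PIdl\<^bsub>A\<^esub> x" "x \<in> M <+>\<^bsub>A\<^esub> PIdl\<^bsub>A\<^esub> x"
    "\<And>y. y \<in> M <+>\<^bsub>A\<^esub> PIdl\<^bsub>A\<^esub> x \<Longrightarrow> \<exists>m\<in>M. \<exists>r\<in>carrier A. y = m \<oplus>\<^bsub>A\<^esub> r \<otimes>\<^bsub>A\<^esub> x"
proof -
  interpret A: cring A by fact
  interpret M: ideal M A by fact
  show "ideal (M <+>\<^bsub>A\<^esub> PIdl\<^bsub>A\<^esub> x) A"
    using A.add_ideals[OF assms(2) A.cgenideal_ideal[OF assms(3)]] .
  show "M \<subseteq> M <+>\<^bsub>A\<^esub> PIdl\<^bsub>A\<^esub> x"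
  proof
    fix m assume m: "m \<in> M"
    have "m = m \<oplus>\<^bsub>A\<^esub> \<zero>\<^bsub>A\<^esub> \<otimes>\<^bsub>A\<^esub> x" using m M.Icarr assms(3) by simp
    then show "m \<in> M <+>\<^bsub>A\<^esub> PIdl\<^bsub>A\<^esub> x" unfolding set_add_def' cgenideal_def using m by blast
  qed
  have "x = \<zero>\<^bsub>A\<^esub> \<oplus>\<^bsub>A\<^esub> \<one>\<^bsub>A\<^esub> \<otimes>\<^bsub>A\<^esub> x" using assms(3) by simp
  then show "x \<in> M <+>\<^bsub>A\<^esub> PIdl\<^bsub>A\<^esub> x" unfolding set_add_def' cgenideal_def
    using M.zero_closed by blast
  fix y assume "y \<in> M <+>\<^bsub>A\<^esub> PIdl\<^bsub>A\<^esub> x"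
  then show "\<exists>m\<in>M. \<exists>r\<in>carrier A. y = m \<oplus>\<^bsub>A\<^esub> r \<otimes>\<^bsub>A\<^esub> x"
    unfolding set_add_def' cgenideal_def by blast
qed

lemma exists_prime_disjoint:
  assumes "cring A" "ideal q A" "mult_closed A S" "q \<inter> S = {}"
  shows "\<exists>p. primeideal p A \<and> q \<subseteq> p \<and> p \<inter> S = {}"
proof -
  interpret A: cring A by fact
  define AA where "AA = {I. ideal I A \<and> q \<subseteq> I \<and> I \<inter> S = {}}"
  have "\<exists>M\<in>AA. \<forall>Y\<in>AA. M \<subseteq> Y \<longrightarrow> Y = M"
  proof (rule subset_Zorn_nonempty)
    show "AA \<noteq> {}" using assms unfolding AA_def by blast
    fix C assume C: "C \<noteq> {}" "subset.chain AA C"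
    have "subset.chain {I. ideal I A} C" using C(2) unfolding pred_on.chain_def AA_def by auto
    then have "ideal (\<Union>C) A" using A.chain_Union_is_ideal[of C] C(1) by simp
    moreover have "q \<subseteq> \<Union>C"
    proof -
      obtain I where I: "I \<in> C" using C(1) by blast
      then have "q \<subseteq> I" using C(2) unfolding pred_on.chain_def AA_def by blast
      then show ?thesis using I by blast
    qed
    moreover have "\<Union>C \<inter> S = {}" using C unfolding pred_on.chain_def AA_def by auto
    ultimately show "\<Union>C \<in> AA" unfolding AA_def by simp
  qed
  then obtain M where MA: "M \<in> AA" and MM: "\<forall>Y\<in>AA. M \<subseteq> Y \<longrightarrow> Y = M" by blast
  have M: "ideal M A" "q \<subseteq> M" "M \<inter> S = {}" using MA unfolding AA_def by auto
  have Mmax: "Y = M" if "ideal Y A" "q \<subseteq> Y" "Y \<inter> S = {}" "M \<subseteq> Y" for Y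
  proof -
    have "Y \<in> AA" using that unfolding AA_def by simp
    then show ?thesis using MM that(4) by simp
  qed
  interpret M: ideal M A by fact
  have Sc: "S \<subseteq> carrier A" "\<one>\<^bsub>A\<^esub> \<in> S" "\<And>x y. x \<in> S \<Longrightarrow> y \<in> S \<Longrightarrow> x \<otimes>\<^bsub>A\<^esub> y \<in> S"
    using assms(3) unfolding mult_closed_def by auto
  have key: "\<exists>m\<in>M. \<exists>r\<in>carrier A. m \<oplus>\<^bsub>A\<^esub> r \<otimes>\<^bsub>A\<^esub> x \<in> S" if x: "x \<in> carrier A" "x \<notin> M" for x
  proof -
    let ?J = "M <+>\<^bsub>A\<^esub> PIdl\<^bsub>A\<^esub> x"
    note J = sum_with_elem[OF assms(1) M(1) x(1)]
    have "?J \<noteq> M" using J(3) x(2) by auto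
    then have "?J \<inter> S \<noteq> {}" using Mmax[OF J(1)] J(2) M(2) by blast
    then obtain y where "y \<in> ?J" "y \<in> S" by auto
    then show ?thesis using J(4) by blast
  qed
  have "primeideal M A"
  proof (rule primeidealI[OF M(1) assms(1)])
    show "carrier A \<noteq> M" using Sc M(3) by auto
    fix a b assume ab: "a \<in> carrier A" "b \<in> carrier A" "a \<otimes>\<^bsub>A\<^esub> b \<in> M"
    show "a \<in> M \<or> b \<in> M"
    proof (rule ccontr)
      assume "\<not> (a \<in> M \<or> b \<in> M)"
      then have na: "a \<notin> M" and nb: "b \<notin> M" by auto
      obtain m1 r1 where m1: "m1 \<in> M" "r1 \<in> carrier A" "m1 \<oplus>\<^bsub>A\<^esub> r1 \<otimes>\<^bsub>A\<^esub> a \<in> S"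
        using key[OF ab(1) na] by blast
      obtain m2 r2 where m2: "m2 \<in> M" "r2 \<in> carrier A" "m2 \<oplus>\<^bsub>A\<^esub> r2 \<otimes>\<^bsub>A\<^esub> b \<in> S"
        using key[OF ab(2) nb] by blast
      have c: "m1 \<in> carrier A" "m2 \<in> carrier A" using m1 m2 M.Icarr by auto
      define s2 where "s2 = m2 \<oplus>\<^bsub>A\<^esub> r2 \<otimes>\<^bsub>A\<^esub> b"
      have s2c: "s2 \<in> carrier A" using c m2 ab unfolding s2_def by simp
      have ra: "r1 \<otimes>\<^bsub>A\<^esub> a \<in> carrier A" "r2 \<otimes>\<^bsub>A\<^esub> b \<in> carrier A" using m1 m2 ab by auto
      have e1: "(m1 \<oplus>\<^bsub>A\<^esub> r1 \<otimes>\<^bsub>A\<^esub> a) \<otimes>\<^bsub>A\<^esub> s2 = m1 \<otimes>\<^bsub>A\<^esub> s2 \<oplus>\<^bsub>A\<^esub> (r1 \<otimes>\<^bsub>A\<^esub> a) \<otimes>\<^bsub>A\<^esub> s2"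
        using A.l_distr[OF c(1) ra(1) s2c] .
      have e2: "(r1 \<otimes>\<^bsub>A\<^esub> a) \<otimes>\<^bsub>A\<^esub> s2 = (r1 \<otimes>\<^bsub>A\<^esub> a) \<otimes>\<^bsub>A\<^esub> m2 \<oplus>\<^bsub>A\<^esub> (r1 \<otimes>\<^bsub>A\<^esub> a) \<otimes>\<^bsub>A\<^esub> (r2 \<otimes>\<^bsub>A\<^esub> b)"
        unfolding s2_def using A.r_distr[OF c(2) ra(2) ra(1)] .
      have e3: "(r1 \<otimes>\<^bsub>A\<^esub> a) \<otimes>\<^bsub>A\<^esub> (r2 \<otimes>\<^bsub>A\<^esub> b) = (r1 \<otimes>\<^bsub>A\<^esub> r2) \<otimes>\<^bsub>A\<^esub> (a \<otimes>\<^bsub>A\<^esub> b)"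
        using m1(2) m2(2) ab(1,2) by (metis A.m_assoc A.m_closed A.m_comm)
      have i1: "m1 \<otimes>\<^bsub>A\<^esub> s2 \<in> M" using M.I_r_closed[OF m1(1) s2c] .
      have i2: "(r1 \<otimes>\<^bsub>A\<^esub> a) \<otimes>\<^bsub>A\<^esub> m2 \<in> M" using M.I_l_closed[OF m2(1) ra(1)] .
      have i3: "(r1 \<otimes>\<^bsub>A\<^esub> r2) \<otimes>\<^bsub>A\<^esub> (a \<otimes>\<^bsub>A\<^esub> b) \<in> M"
        using M.I_l_closed[OF ab(3)] m1(2) m2(2) by simp
      have "(m1 \<oplus>\<^bsub>A\<^esub> r1 \<otimes>\<^bsub>A\<^esub> a) \<otimes>\<^bsub>A\<^esub> s2 \<in> M"
        unfolding e1 e2 e3 using i1 i2 i3 M.a_closed by blast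
      then have "(m1 \<oplus>\<^bsub>A\<^esub> r1 \<otimes>\<^bsub>A\<^esub> a) \<otimes>\<^bsub>A\<^esub> (m2 \<oplus>\<^bsub>A\<^esub> r2 \<otimes>\<^bsub>A\<^esub> b) \<in> M"
        unfolding s2_def .
      then show False using Sc(3)[OF m1(3) m2(3)] M(3) by auto
    qed
  qed
  then show ?thesis using M by blast
qed

lemma pseudoprime_core:
  assumes "diff_ring G A act" "pseudoprime G A act q"
  shows "\<exists>p. primeideal p A \<and> q = core G A act p"
proof -
  obtain S where S: "mult_closed A S" "diff_ideal G A act q" "q \<inter> S = {}"
    and mx: "\<And>J. diff_ideal G A act J \<Longrightarrow> J \<inter> S = {} \<Longrightarrow> q \<subseteq> J \<Longrightarrow> J = q"
    using assms(2) unfolding pseudoprime_def by blast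
  obtain p where p: "primeideal p A" "q \<subseteq> p" "p \<inter> S = {}"
    using exists_prime_disjoint[OF dr_cring[OF assms(1)] _ S(1,3)] S(2) by (auto simp: diff_ideal_def)
  have qc: "q \<subseteq> carrier A" using S(2) ideal.Icarr by (fastforce simp: diff_ideal_def)
  have "q \<subseteq> core G A act p" unfolding core_def
  proof (intro subsetI CollectI conjI)
    fix x assume x: "x \<in> q"
    show "x \<in> carrier A" using x qc by auto
    show "\<forall>g\<in>carrier G. act g x \<in> p"
    proof
      fix g assume g: "g \<in> carrier G"
      have "act g x \<in> q" using S(2) x g by (auto simp: diff_ideal_def)
      then show "act g x \<in> p" using p(2) by auto
    qed
  qed
  moreover have "core G A act p \<inter> S = {}" using core_sub[OF assms(1), of p] p(3) by auto
  ultimately have "core G A act p = q" using mx core_diff_ideal[OF assms(1) p(1)] by blast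
  then show ?thesis using p(1) by blast
qed

lemma pseudoprime_iff:
  assumes "diff_ring G A act"
  shows "pseudoprime G A act q \<longleftrightarrow> (\<exists>p. primeideal p A \<and> q = core G A act p)"
  using pseudoprime_core[OF assms] core_pseudoprime[OF assms] by blast



lemma contr_eq: "contr A f Q = {a \<in> carrier A. f a \<in> Q}"
  unfolding contr_def by auto

lemma core_mono: "p \<subseteq> p' \<Longrightarrow> core G A act p \<subseteq> core G A act p'"
  unfolding core_def by auto

lemma contr_core:
  assumes "diff_ring G A actA" "diff_ring G B actB" "diff_hom G A actA B actB f"
  shows "contr A f (core G B actB Q) = core G A actA (contr A f Q)"
proof -
  have fh: "f \<in> ring_hom A B" and fa: "\<And>g x. g \<in> carrier G \<Longrightarrow> x \<in> carrier A \<Longrightarrow> f (actA g x) = actB g (f x)"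
    using assms(3) by (auto simp: diff_hom_def)
  show ?thesis unfolding contr_eq core_def
    using ring_hom_closed[OF fh] fa dr_closed[OF assms(1)] by auto
qed

lemma contr_conjp:
  assumes "diff_ring G A actA" "diff_ring G B actB" "diff_hom G A actA B actB f" "t \<in> carrier G"
  shows "contr A f (conjp B actB t Q) = conjp A actA t (contr A f Q)"
proof -
  have fh: "f \<in> ring_hom A B" and fa: "\<And>g x. g \<in> carrier G \<Longrightarrow> x \<in> carrier A \<Longrightarrow> f (actA g x) = actB g (f x)"
    using assms(3) by (auto simp: diff_hom_def)
  show ?thesis unfolding contr_eq conjp_def
    using ring_hom_closed[OF fh] fa[OF assms(4)] dr_closed[OF assms(1) assms(4)] by auto
qed

lemma contr_prime:
  assumes "diff_ring G A actA" "diff_ring G B actB" "diff_hom G A actA B actB f" "primeideal Q B"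
  shows "primeideal (contr A f Q) A"
  unfolding contr_eq
  using vimage_prime[OF dr_cring[OF assms(1)] dr_cring[OF assms(2)] _ assms(4)] assms(3)
  by (simp add: diff_hom_def)

lemma avoid_induct:
  assumes "diff_ring G A act" "primeideal p A" "ideal p' A" "finite T" "T \<subseteq> carrier G"
    "\<forall>t\<in>T. \<exists>a\<in>carrier A. act t a \<in> p' \<and> a \<notin> p"
  shows "\<exists>x\<in>carrier A. x \<notin> p \<and> (\<forall>t\<in>T. act t x \<in> p')"
  using assms(4,5,6)
proof (induction T rule: finite_induct)
  case empty
  interpret P: primeideal p A by fact
  show ?case using P.one_imp_carrier P.I_notcarr P.one_closed by auto
next
  case (insert t T)
  interpret P: primeideal p A by fact
  interpret P': ideal p' A by fact
  obtain x where x: "x \<in> carrier A" "x \<notin> p" "\<forall>t\<in>T. act t x \<in> p'" using insert by auto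
  obtain a where a: "a \<in> carrier A" "act t a \<in> p'" "a \<notin> p" using insert by auto
  have "x \<otimes>\<^bsub>A\<^esub> a \<notin> p" using P.I_prime x a by blast
  moreover have "\<forall>t'\<in>insert t T. act t' (x \<otimes>\<^bsub>A\<^esub> a) \<in> p'"
  proof
    fix t' assume t': "t' \<in> insert t T"
    then have tc: "t' \<in> carrier G" using insert by auto
    have e: "act t' (x \<otimes>\<^bsub>A\<^esub> a) = act t' x \<otimes>\<^bsub>A\<^esub> act t' a" using dr_mult[OF assms(1) tc x(1) a(1)] .
    show "act t' (x \<otimes>\<^bsub>A\<^esub> a) \<in> p'"
    proof (cases "t' = t")
      case True
      then show ?thesis unfolding e using P'.I_l_closed[OF a(2) dr_closed[OF assms(1) tc x(1)]] by simp
    next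
      case False
      then have "act t' x \<in> p'" using t' x(3) by auto
      then show ?thesis unfolding e using P'.I_r_closed dr_closed[OF assms(1) tc a(1)] by simp
    qed
  qed
  ultimately show ?case using x(1) a(1) by blast
qed

lemma avoid:
  assumes "diff_ring G A act" "finite (carrier G)" "primeideal p A" "ideal p' A"
    "core G A act p' \<subseteq> p"
  shows "\<exists>t\<in>carrier G. conjp A act t p' \<subseteq> p"
proof (rule ccontr)
  assume "\<not> ?thesis"
  then have "\<forall>t\<in>carrier G. \<exists>a\<in>carrier A. act t a \<in> p' \<and> a \<notin> p" unfolding conjp_def by blast
  then obtain x where "x \<in> carrier A" "x \<notin> p" "\<forall>t\<in>carrier G. act t x \<in> p'"
    using avoid_induct[OF assms(1,3,4,2)] by blast
  then show False using assms(5) unfolding core_def by blast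
qed

lemma notin_core:
  "s \<in> carrier A \<Longrightarrow> s \<notin> core G A act p \<Longrightarrow> \<exists>t\<in>carrier G. s \<notin> conjp A act t p"
  unfolding core_def conjp_def by auto

lemma going_from_step:
  assumes step: "\<And>Q P'. Q \<in> Y' \<Longrightarrow> P' \<in> X' \<Longrightarrow> RX (g Q) P' \<Longrightarrow> \<exists>Q'\<in>Y'. RY Q Q' \<and> g Q' = P'"
  shows "going_prop RX RY g Y' X'"
  unfolding going_prop_def
proof (intro allI impI)
  fix n m P Q
  assume H: "0 < m \<and> m < n \<and> (\<forall>i<n. P i \<in> X') \<and> (\<forall>i. Suc i < n \<longrightarrow> RX (P i) (P (Suc i))) \<and>
        (\<forall>i<m. Q i \<in> Y') \<and> (\<forall>i. Suc i < m \<longrightarrow> RY (Q i) (Q (Suc i))) \<and> (\<forall>i<m. g (Q i) = P i)"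
  have "k \<le> n \<longrightarrow> m \<le> k \<longrightarrow> (\<exists>Q'. (\<forall>i<m. Q' i = Q i) \<and> (\<forall>i<k. Q' i \<in> Y') \<and>
              (\<forall>i. Suc i < k \<longrightarrow> RY (Q' i) (Q' (Suc i))) \<and> (\<forall>i<k. g (Q' i) = P i))" for k
  proof (induction k)
    case 0
    then show ?case using H by auto
  next
    case (Suc k)
    show ?case
    proof (intro impI)
      assume kn: "Suc k \<le> n" and mk: "m \<le> Suc k"
      show "\<exists>Q'. (\<forall>i<m. Q' i = Q i) \<and> (\<forall>i<Suc k. Q' i \<in> Y') \<and>
              (\<forall>i. Suc i < Suc k \<longrightarrow> RY (Q' i) (Q' (Suc i))) \<and> (\<forall>i<Suc k. g (Q' i) = P i)"
      proof (cases "m = Suc k")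
        case True
        then show ?thesis using H by (intro exI[of _ Q]) auto
      next
        case False
        then have mk': "m \<le> k" using mk by auto
        then obtain Q' where Q': "\<forall>i<m. Q' i = Q i" "\<forall>i<k. Q' i \<in> Y'"
            "\<forall>i. Suc i < k \<longrightarrow> RY (Q' i) (Q' (Suc i))" "\<forall>i<k. g (Q' i) = P i"
          using Suc.IH kn by auto
        have k1: "k = Suc (k - 1)" using mk' H by auto
        have a1: "Q' (k - 1) \<in> Y'" using Q'(2) k1 by (metis lessI)
        have a2: "P k \<in> X'" using H kn by auto
        have a3: "RX (g (Q' (k - 1))) (P k)"
        proof -
          have "g (Q' (k - 1)) = P (k - 1)" using Q'(4) k1 by (metis lessI)
          moreover have "RX (P (k - 1)) (P (Suc (k - 1)))" using H kn k1 by (metis Suc_le_lessD)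
          ultimately show ?thesis using k1 by simp
        qed
        obtain Qn where Qn: "Qn \<in> Y'" "RY (Q' (k - 1)) Qn" "g Qn = P k" using step[OF a1 a2 a3] by blast
        show ?thesis
        proof (intro exI[of _ "Q'(k := Qn)"] conjI allI impI)
          fix i assume "i < m" then show "(Q'(k := Qn)) i = Q i" using Q'(1) mk' by auto
        next
          fix i assume "i < Suc k" then show "(Q'(k := Qn)) i \<in> Y'" using Q'(2) Qn(1) by (cases "i = k") auto
        next
          fix i assume i: "Suc i < Suc k"
          show "RY ((Q'(k := Qn)) i) ((Q'(k := Qn)) (Suc i))"
          proof (cases "Suc i = k")
            case True
            then have "i = k - 1" by auto
            then show ?thesis using True Qn(2) by auto
          next
            case False
            then show ?thesis using i Q'(3) by auto
          qed
        next
          fix i assume "i < Suc k" then show "g ((Q'(k := Qn)) i) = P i" using Q'(4) Qn(3) by (cases "i = k") auto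
        qed
      qed
    qed
  qed
  from this[of n] H
  show "\<exists>Q'. (\<forall>i<m. Q' i = Q i) \<and> (\<forall>i<n. Q' i \<in> Y') \<and>
              (\<forall>i. Suc i < n \<longrightarrow> RY (Q' i) (Q' (Suc i))) \<and> (\<forall>i<n. g (Q' i) = P i)" by auto
qed

lemma step_from_going:
  assumes "going_prop RX RY g Y' X'" "Q \<in> Y'" "g Q \<in> X'" "P' \<in> X'" "RX (g Q) P'"
  shows "\<exists>Q'\<in>Y'. RY Q Q' \<and> g Q' = P'"
proof -
  let ?P = "\<lambda>i::nat. if i = 0 then g Q else P'"
  let ?Q = "\<lambda>i::nat. Q"
  have pre: "0 < (1::nat) \<and> 1 < (2::nat) \<and> (\<forall>i<2. ?P i \<in> X') \<and> (\<forall>i. Suc i < 2 \<longrightarrow> RX (?P i) (?P (Suc i))) \<and>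
        (\<forall>i<1. ?Q i \<in> Y') \<and> (\<forall>i. Suc i < 1 \<longrightarrow> RY (?Q i) (?Q (Suc i))) \<and> (\<forall>i<1. g (?Q i) = ?P i)"
    using assms(2-5) by (auto simp: less_2_cases_iff)
  have "\<exists>Q'. (\<forall>i<1. Q' i = ?Q i) \<and> (\<forall>i<2. Q' i \<in> Y') \<and>
              (\<forall>i. Suc i < 2 \<longrightarrow> RY (Q' i) (Q' (Suc i))) \<and> (\<forall>i<2. g (Q' i) = ?P i)"
    using assms(1)[unfolded going_prop_def, rule_format, OF pre] .
  then obtain Q' where q: "\<forall>i<1. Q' i = Q" "\<forall>i<2. Q' i \<in> Y'"
     "\<forall>i. Suc i < 2 \<longrightarrow> RY (Q' i) (Q' (Suc i))" "\<forall>i<2. g (Q' i) = ?P i" by blast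
  have "Q' 0 = Q" using q(1) by simp
  moreover have "Q' 1 \<in> Y'" using q(2) by simp
  moreover have "RY (Q' 0) (Q' 1)" using q(3) by simp
  moreover have "g (Q' 1) = P'" using q(4) by simp
  ultimately show ?thesis by auto
qed



lemma pp_ideal: "pseudoprime G A act q \<Longrightarrow> ideal q A"
  unfolding pseudoprime_def diff_ideal_def by blast

lemma part1:
  assumes dA: "diff_ring G A actA" and dB: "diff_ring G B actB" and dh: "diff_hom G A actA B actB f"
    and s: "s \<in> carrier A" and u: "u \<in> carrier B"
    and hyp: "contr A f ` Spec_loc B (f s \<otimes>\<^bsub>B\<^esub> u) = Spec_loc A s"
  shows "contr A f ` PSpec_basic G B actB (f s \<otimes>\<^bsub>B\<^esub> u) = PSpec_basic G A actA s"
proof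
  have fh: "f \<in> ring_hom A B" using dh by (simp add: diff_hom_def)
  have fs: "f s \<in> carrier B" using ring_hom_closed[OF fh s] .
  show "contr A f ` PSpec_basic G B actB (f s \<otimes>\<^bsub>B\<^esub> u) \<subseteq> PSpec_basic G A actA s"
  proof
    fix P assume "P \<in> contr A f ` PSpec_basic G B actB (f s \<otimes>\<^bsub>B\<^esub> u)"
    then obtain Q where Q: "pseudoprime G B actB Q" "f s \<otimes>\<^bsub>B\<^esub> u \<notin> Q" and P: "P = contr A f Q"
      unfolding PSpec_basic_def PSpec_def by auto
    obtain q0 where q0: "primeideal q0 B" "Q = core G B actB q0" using pseudoprime_core[OF dB Q(1)] by blast
    have "P = core G A actA (contr A f q0)" using P q0(2) contr_core[OF dA dB dh] by simp
    then have "pseudoprime G A actA P" using core_pseudoprime[OF dA contr_prime[OF dA dB dh q0(1)]] by simp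
    moreover have "s \<notin> P"
    proof
      assume "s \<in> P"
      then have "f s \<in> Q" using P by (simp add: contr_eq)
      then have "f s \<otimes>\<^bsub>B\<^esub> u \<in> Q" using ideal.I_r_closed[OF pp_ideal[OF Q(1)] _ u] by simp
      then show False using Q(2) by simp
    qed
    ultimately show "P \<in> PSpec_basic G A actA s" unfolding PSpec_basic_def PSpec_def by simp
  qed
  show "PSpec_basic G A actA s \<subseteq> contr A f ` PSpec_basic G B actB (f s \<otimes>\<^bsub>B\<^esub> u)"
  proof
    fix P assume "P \<in> PSpec_basic G A actA s"
    then have P: "pseudoprime G A actA P" "s \<notin> P" unfolding PSpec_basic_def PSpec_def by auto
    obtain p where p: "primeideal p A" "P = core G A actA p" using pseudoprime_core[OF dA P(1)] by blast
    obtain t where t: "t \<in> carrier G" "s \<notin> conjp A actA t p" using notin_core[OF s] P(2) p(2) by blast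
    have "conjp A actA t p \<in> Spec_loc A s" using conjp_prime[OF dA t(1) p(1)] t(2) by (simp add: Spec_loc_def)
    then obtain q0 where q0: "q0 \<in> Spec_loc B (f s \<otimes>\<^bsub>B\<^esub> u)" "contr A f q0 = conjp A actA t p"
      using hyp by (metis imageE)
    have q0p: "primeideal q0 B" "f s \<otimes>\<^bsub>B\<^esub> u \<notin> q0" using q0(1) by (auto simp: Spec_loc_def)
    let ?Q = "core G B actB q0"
    have "pseudoprime G B actB ?Q" using core_pseudoprime[OF dB q0p(1)] .
    moreover have "f s \<otimes>\<^bsub>B\<^esub> u \<notin> ?Q" using core_sub[OF dB] q0p(2) by blast
    moreover have "contr A f ?Q = P"
      using contr_core[OF dA dB dh] q0(2) core_conjp[OF dA t(1)] p(2) by simp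
    ultimately show "P \<in> contr A f ` PSpec_basic G B actB (f s \<otimes>\<^bsub>B\<^esub> u)"
      unfolding PSpec_basic_def PSpec_def by blast
  qed
qed

lemma part2:
  assumes dA: "diff_ring G A actA" and dB: "diff_ring G B actB" and dh: "diff_hom G A actA B actB f"
    and fin: "finite (carrier G)"
    and s: "s \<in> carrier A"
    and hyp: "going_up (contr A f) (Spec_loc B (f s)) (Spec_loc A s)"
  shows "going_up (contr A f) (PSpec_basic G B actB (f s)) (PSpec_basic G A actA s)"
  unfolding going_up_def
proof (rule going_from_step)
  fix Q P' assume Q: "Q \<in> PSpec_basic G B actB (f s)" and P': "P' \<in> PSpec_basic G A actA s"
    and sub: "contr A f Q \<subseteq> P'"
  have Qp: "pseudoprime G B actB Q" "f s \<notin> Q" using Q unfolding PSpec_basic_def PSpec_def by auto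
  have P'p: "pseudoprime G A actA P'" "s \<notin> P'" using P' unfolding PSpec_basic_def PSpec_def by auto
  obtain q0 where q0: "primeideal q0 B" "Q = core G B actB q0" using pseudoprime_core[OF dB Qp(1)] by blast
  obtain p' where p': "primeideal p' A" "P' = core G A actA p'" using pseudoprime_core[OF dA P'p(1)] by blast
  obtain t where t: "t \<in> carrier G" "s \<notin> conjp A actA t p'" using notin_core[OF s] P'p(2) p'(2) by blast
  define p1 where "p1 = conjp A actA t p'"
  have p1: "primeideal p1 A" "core G A actA p1 = P'" "s \<notin> p1"
    using conjp_prime[OF dA t(1) p'(1)] core_conjp[OF dA t(1)] p'(2) t(2) unfolding p1_def by auto
  have "core G A actA (contr A f q0) \<subseteq> p1"
    using sub q0(2) contr_core[OF dA dB dh] core_sub[OF dA, of p1] p1(2) by auto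
  then obtain \<sigma> where \<sigma>: "\<sigma> \<in> carrier G" "conjp A actA \<sigma> (contr A f q0) \<subseteq> p1"
    using avoid[OF dA fin p1(1) primeideal.axioms(1)[OF contr_prime[OF dA dB dh q0(1)]]] by blast
  define q1 where "q1 = conjp B actB \<sigma> q0"
  have q1: "primeideal q1 B" "core G B actB q1 = Q" "contr A f q1 \<subseteq> p1"
    using conjp_prime[OF dB \<sigma>(1) q0(1)] core_conjp[OF dB \<sigma>(1)] q0(2) \<sigma>(2) contr_conjp[OF dA dB dh \<sigma>(1)]
    unfolding q1_def by auto
  have "s \<notin> contr A f q1" using q1(3) p1(3) by auto
  then have fsq1: "f s \<notin> q1" using s by (simp add: contr_eq)
  have "\<exists>q2\<in>Spec_loc B (f s). q1 \<subseteq> q2 \<and> contr A f q2 = p1"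
    apply (rule step_from_going[OF hyp[unfolded going_up_def]])
    using q1(1) fsq1 contr_prime[OF dA dB dh q1(1)] \<open>s \<notin> contr A f q1\<close> p1 q1(3)
    by (auto simp: Spec_loc_def)
  then obtain q2 where q2: "primeideal q2 B" "f s \<notin> q2" "q1 \<subseteq> q2" "contr A f q2 = p1"
    by (auto simp: Spec_loc_def)
  let ?Q' = "core G B actB q2"
  have "?Q' \<in> PSpec_basic G B actB (f s)"
    using core_pseudoprime[OF dB q2(1)] core_sub[OF dB, of q2] q2(2)
    unfolding PSpec_basic_def PSpec_def by auto
  moreover have "Q \<subseteq> ?Q'" using core_mono[OF q2(3)] q1(2) by auto
  moreover have "contr A f ?Q' = P'" using contr_core[OF dA dB dh] q2(4) p1(2) by simp
  ultimately show "\<exists>Q'\<in>PSpec_basic G B actB (f s). Q \<subseteq> Q' \<and> contr A f Q' = P'" by blast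
qed

lemma part3:
  assumes dA: "diff_ring G A actA" and dB: "diff_ring G B actB" and dh: "diff_hom G A actA B actB f"
    and fin: "finite (carrier G)"
    and s: "s \<in> carrier A" and u: "u \<in> carrier B"
    and hyp: "going_down (contr A f) (Spec_loc B (f s \<otimes>\<^bsub>B\<^esub> u)) (Spec_loc A s)"
  shows "going_down (contr A f) (PSpec_basic G B actB (f s \<otimes>\<^bsub>B\<^esub> u)) (PSpec_basic G A actA s)"
  unfolding going_down_def
proof (rule going_from_step)
  have fh: "f \<in> ring_hom A B" using dh by (simp add: diff_hom_def)
  have fs: "f s \<in> carrier B" using ring_hom_closed[OF fh s] .
  interpret B: cring B using dr_cring[OF dB] .
  define w where "w = f s \<otimes>\<^bsub>B\<^esub> u"
  have wc: "w \<in> carrier B" using fs u unfolding w_def by simp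
  fix Q P' assume Q: "Q \<in> PSpec_basic G B actB (f s \<otimes>\<^bsub>B\<^esub> u)" and P': "P' \<in> PSpec_basic G A actA s"
    and sub: "contr A f Q \<supseteq> P'"
  have Qp: "pseudoprime G B actB Q" "w \<notin> Q" using Q unfolding PSpec_basic_def PSpec_def w_def by auto
  have P'p: "pseudoprime G A actA P'" "s \<notin> P'" using P' unfolding PSpec_basic_def PSpec_def by auto
  obtain q0 where q0: "primeideal q0 B" "Q = core G B actB q0" using pseudoprime_core[OF dB Qp(1)] by blast
  obtain p' where p': "primeideal p' A" "P' = core G A actA p'" using pseudoprime_core[OF dA P'p(1)] by blast
  obtain t where t: "t \<in> carrier G" "w \<notin> conjp B actB t q0" using notin_core[OF wc] Qp(2) q0(2) by blast
  define q1 where "q1 = conjp B actB t q0"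
  have q1: "primeideal q1 B" "core G B actB q1 = Q" "w \<notin> q1"
    using conjp_prime[OF dB t(1) q0(1)] core_conjp[OF dB t(1)] q0(2) t(2) unfolding q1_def by auto
  define p where "p = contr A f q1"
  have pp: "primeideal p A" using contr_prime[OF dA dB dh q1(1)] unfolding p_def .
  have sp: "s \<notin> p"
  proof
    assume "s \<in> p"
    then have "f s \<in> q1" unfolding p_def by (simp add: contr_eq)
    then have "w \<in> q1" unfolding w_def using ideal.I_r_closed[OF primeideal.axioms(1)[OF q1(1)] _ u] by simp
    then show False using q1(3) by simp
  qed
  have "core G A actA p' \<subseteq> p"
    using sub p'(2) q1(2) contr_core[OF dA dB dh, of q1] core_sub[OF dA, of "contr A f q1"]
    unfolding p_def by auto
  then obtain \<tau> where \<tau>: "\<tau> \<in> carrier G" "conjp A actA \<tau> p' \<subseteq> p"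
    using avoid[OF dA fin pp primeideal.axioms(1)[OF p'(1)]] by blast
  define p1 where "p1 = conjp A actA \<tau> p'"
  have p1: "primeideal p1 A" "core G A actA p1 = P'" "s \<notin> p1" "p1 \<subseteq> p"
    using conjp_prime[OF dA \<tau>(1) p'(1)] core_conjp[OF dA \<tau>(1)] p'(2) \<tau>(2) sp unfolding p1_def by auto
  have "\<exists>q2\<in>Spec_loc B w. q1 \<supseteq> q2 \<and> contr A f q2 = p1"
    apply (rule step_from_going[OF hyp[unfolded going_down_def, folded w_def]])
    using q1(1) q1(3) pp sp p1 unfolding p_def
    by (auto simp: Spec_loc_def)
  then obtain q2 where q2: "primeideal q2 B" "w \<notin> q2" "q2 \<subseteq> q1" "contr A f q2 = p1"
    by (auto simp: Spec_loc_def)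
  let ?Q' = "core G B actB q2"
  have "?Q' \<in> PSpec_basic G B actB (f s \<otimes>\<^bsub>B\<^esub> u)"
    using core_pseudoprime[OF dB q2(1)] core_sub[OF dB, of q2] q2(2)
    unfolding PSpec_basic_def PSpec_def w_def by auto
  moreover have "Q \<supseteq> ?Q'" using core_mono[OF q2(3)] q1(2) by auto
  moreover have "contr A f ?Q' = P'" using contr_core[OF dA dB dh] q2(4) p1(2) by simp
  ultimately show "\<exists>Q'\<in>PSpec_basic G B actB (f s \<otimes>\<^bsub>B\<^esub> u). Q \<supseteq> Q' \<and> contr A f Q' = P'" by blast
qed


theorem proposition4p5:
  fixes G :: "('g,'c) monoid_scheme"
    and A :: "('a,'m) ring_scheme" and actA :: "'g \<Rightarrow> 'a \<Rightarrow> 'a"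
    and B :: "('b,'n) ring_scheme" and actB :: "'g \<Rightarrow> 'b \<Rightarrow> 'b"
    and f :: "'a \<Rightarrow> 'b"
  assumes "group G" and "finite (carrier G)"
    and "diff_ring G A actA" and "diff_ring G B actB"
    and "diff_hom G A actA B actB f"
  shows
    "(\<forall>s\<in>carrier A. \<forall>u\<in>carrier B.
        contr A f ` Spec_loc B (f s \<otimes>\<^bsub>B\<^esub> u) = Spec_loc A s \<longrightarrow>
        contr A f ` PSpec_basic G B actB (f s \<otimes>\<^bsub>B\<^esub> u) = PSpec_basic G A actA s)
   \<and> (\<forall>s\<in>carrier A.
        going_up (contr A f) (Spec_loc B (f s)) (Spec_loc A s) \<longrightarrow>
        going_up (contr A f) (PSpec_basic G B actB (f s)) (PSpec_basic G A actA s))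
   \<and> (\<forall>s\<in>carrier A. \<forall>u\<in>carrier B.
        going_down (contr A f) (Spec_loc B (f s \<otimes>\<^bsub>B\<^esub> u)) (Spec_loc A s) \<longrightarrow>
        going_down (contr A f) (PSpec_basic G B actB (f s \<otimes>\<^bsub>B\<^esub> u)) (PSpec_basic G A actA s))"
  using part1[OF assms(3,4,5)] part2[OF assms(3,4,5,2)] part3[OF assms(3,4,5,2)] by blast

end
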